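(* Let $s>1$ be an integer, $z\in\mathbb{C}$ and $a$ a parameter for which $\Phi(z,s,a)$ is defined. If the integral converges, then \[ \Phi(z,s,a)=\frac{-s}{(s-1)!}\int_0^1\!\!\int_0^1\frac{(xy)^{a-1}\left(-\log(y)\right)^{s-1}}{(1-zxy)\log(xy)}\,dx\,dy, \] and \[ \zeta(s)=\frac{s}{(s-1)!}(-1)^s\int_0^1\!\!\int_0^1\frac{\log^{s-1}(y)}{(1-xy)\log(xy)}\,dx\,dy. \]
   Context: The Lerch transcendent is $\Phi(z,s,a)=\sum_{k=0}^\infty \frac{z^k}{(k+a)^s}$ (where this series converges); $\zeta$ is the Riemann zeta function. *)

theory Defs
  imports "HOL-Analysis.Analysis"
begin

definition lerch_phi :: "complex \<Rightarrow> nat \<Rightarrow> complex \<Rightarrow> complex" where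
  "lerch_phi z s a = (\<Sum>k. z ^ k / (of_nat k + a) ^ s)"

definition lerch_defined :: "complex \<Rightarrow> nat \<Rightarrow> complex \<Rightarrow> bool" where
  "lerch_defined z s a \<longleftrightarrow> (\<forall>k::nat. of_nat k + a \<noteq> 0) \<and>
     summable (\<lambda>k. z ^ k / (of_nat k + a) ^ s)"

definition riemann_zeta :: "nat \<Rightarrow> real" where
  "riemann_zeta s = (\<Sum>n. 1 / real (Suc n) ^ s)"

definition lerch_integrand :: "complex \<Rightarrow> nat \<Rightarrow> complex \<Rightarrow> real \<times> real \<Rightarrow> complex" where
  "lerch_integrand z s a p = (case p of (x, y) \<Rightarrow>
      (complex_of_real (x * y) powr (a - 1)) * complex_of_real ((- ln y) ^ (s - 1))
      / ((1 - z * complex_of_real (x * y)) * complex_of_real (ln (x * y))))"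

definition zeta_integrand :: "nat \<Rightarrow> real \<times> real \<Rightarrow> real" where
  "zeta_integrand s p = (case p of (x, y) \<Rightarrow>
      (ln y) ^ (s - 1) / ((1 - x * y) * ln (x * y)))"

end

theory Submission
  imports Defs "HOL-Complex_Analysis.Cauchy_Integral_Theorem" "HOL-Real_Asymp.Real_Asymp"
begin



lemma powr_shift: "w > 0 \<Longrightarrow> complex_of_real w powr t = of_real w * of_real w powr (t - 1)"
  by (simp add: powr_def exp_diff algebra_simps Ln_of_real exp_of_real)

lemma cpowr_shift: "z \<noteq> 0 \<Longrightarrow> (z::complex) powr t = z * z powr (t - 1)"
  by (simp add: powr_def exp_diff algebra_simps)

primrec Qc :: "complex \<Rightarrow> nat \<Rightarrow> complex \<Rightarrow> complex" where
  "Qc t 0 z = z powr t / t"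
| "Qc t (Suc n) z = z powr t * (- Ln z) ^ Suc n / t + of_nat (Suc n) / t * Qc t n z"

lemma Qc_deriv:
  assumes "t \<noteq> 0" "z \<notin> \<real>\<^sub>\<le>\<^sub>0"
  shows "(Qc t n has_field_derivative (z powr (t - 1) * (- Ln z) ^ n)) (at z)"
proof (induction n)
  case 0
  then show ?case using assms
    by (auto intro!: derivative_eq_intros)
next
  case (Suc n)
  have z0: "z \<noteq> 0" using assms by auto
  have d1: "((\<lambda>z. z powr t) has_field_derivative t * z powr (t-1)) (at z)"
    using has_field_derivative_powr[OF assms(2)] .
  have dL: "((\<lambda>z. - Ln z) has_field_derivative - inverse z) (at z)"
    using DERIV_minus[OF has_field_derivative_Ln[OF assms(2)]] .
  have dp: "((\<lambda>z. (- Ln z) ^ Suc n) has_field_derivative of_nat (Suc n) * (- inverse z * (- Ln z) ^ n)) (at z)"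
    using DERIV_power[OF dL, of "Suc n"] by simp
  have "((\<lambda>z. z powr t * (- Ln z) ^ Suc n / t + of_nat (Suc n) / t * Qc t n z) has_field_derivative
     (t * z powr (t-1) * (- Ln z) ^ Suc n + of_nat (Suc n) * (- inverse z * (- Ln z) ^ n) * z powr t) / t
      + of_nat (Suc n) / t * (z powr (t - 1) * (- Ln z) ^ n)) (at z)"
    by (intro DERIV_add DERIV_cdivide DERIV_cmult DERIV_mult d1 dp Suc)
  then have "((\<lambda>z. z powr t * (- Ln z) ^ Suc n / t + of_nat (Suc n) / t * Qc t n z) has_field_derivative
     z powr (t - 1) * (- Ln z) ^ Suc n) (at z)"
    by (rule DERIV_cong) (use assms z0 cpowr_shift[OF z0, of t] in \<open>simp add: field_simps\<close>)
  then show ?case by simp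
qed

lemma Qc_one: "t \<noteq> 0 \<Longrightarrow> Qc t n 1 = fact n / t ^ Suc n"
  by (induction n) (simp_all add: field_simps)

lemma term_lim0:
  fixes t :: complex assumes "Re t > 0"
  shows "((\<lambda>w. of_real w powr t * (- Ln (of_real w)) ^ k) \<longlongrightarrow> 0) (at_right (0::real))"
proof -
  define \<sigma> where "\<sigma> = Re t"
  have s: "\<sigma> > 0" using assms by (simp add: \<sigma>_def)
  have lim1: "filterlim (\<lambda>w::real. \<sigma> * - ln w) at_top (at_right 0)"
    using s by (intro filterlim_tendsto_pos_mult_at_top tendsto_const) (auto simp: filterlim_uminus_at_top ln_at_0)
  have "((\<lambda>v::real. v ^ k / exp v) \<longlongrightarrow> 0) at_top" by (rule tendsto_power_div_exp_0)
  from filterlim_compose[OF this lim1]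
  have L0: "((\<lambda>w. (\<sigma> * - ln w) ^ k / exp (\<sigma> * - ln w)) \<longlongrightarrow> 0) (at_right 0)" .
  have "((\<lambda>w. (\<sigma> * - ln w) ^ k / exp (\<sigma> * - ln w) / \<sigma> ^ k) \<longlongrightarrow> 0) (at_right 0)"
    using tendsto_divide[OF L0 tendsto_const[of "\<sigma> ^ k"]] s by simp
  moreover have "eventually (\<lambda>w. (\<sigma> * - ln w) ^ k / exp (\<sigma> * - ln w) / \<sigma> ^ k =
      norm (of_real w powr t * (- Ln (of_real w)) ^ k)) (at_right (0::real))"
  proof (rule eventually_at_rightI[of 0 1])
    fix w :: real assume w: "w \<in> {0<..<1}"
    have "norm (of_real w powr t * (- Ln (of_real w)) ^ k) = w powr \<sigma> * (- ln w) ^ k"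
      using w by (simp add: norm_mult norm_powr_real_powr Ln_of_real norm_power \<sigma>_def abs_of_nonneg power_abs[symmetric])
    also have "\<dots> = (\<sigma> * - ln w) ^ k / exp (\<sigma> * - ln w) / \<sigma> ^ k"
      using w s by (simp add: powr_def power_mult_distrib[symmetric] exp_minus field_simps)
    finally show "(\<sigma> * - ln w) ^ k / exp (\<sigma> * - ln w) / \<sigma> ^ k = norm (of_real w powr t * (- Ln (of_real w)) ^ k)" ..
  qed simp
  ultimately have "((\<lambda>w. norm (of_real w powr t * (- Ln (of_real w)) ^ k)) \<longlongrightarrow> 0) (at_right (0::real))"
    by (rule Lim_transform_eventually)
  then show ?thesis by (rule tendsto_norm_zero_cancel)
qed

lemma einterval_01: "einterval 0 1 = {0<..<(1::real)}"
  by (auto simp: einterval_def zero_ereal_def one_ereal_def)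

lemma K_integral:
  fixes t :: complex assumes t: "Re t > 0"
  and int: "set_integrable lborel {0<..<1::real} (\<lambda>w. of_real w powr (t-1) * of_real ((-ln w)^n))"
  shows "(LINT w:{0<..<1}|lborel. of_real w powr (t-1) * of_real ((-ln w)^n)) = fact n / t ^ Suc n"
proof -
  have t0: "t \<noteq> 0" using t by auto
  have "(LBINT w=0..1. of_real w powr (t-1) * of_real ((-ln w)^n)) = fact n / t ^ Suc n - 0"
  proof (rule interval_integral_FTC_integrable[where F = "\<lambda>w. Qc t n (of_real w)"])
    show "(0::ereal) < 1" by simp
  next
    fix x :: real assume x: "0 < ereal x" "ereal x < 1"
    then have x': "0 < x" "x < 1" by auto
    have nn: "complex_of_real x \<notin> \<real>\<^sub>\<le>\<^sub>0" using x' by (auto simp: complex_nonpos_Reals_iff)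
    have "((\<lambda>w. Qc t n (of_real w)) has_vector_derivative
          (of_real x powr (t - 1) * (- Ln (of_real x)) ^ n)) (at x)"
      by (rule has_vector_derivative_real_field[OF Qc_deriv[OF t0 nn]])
    then show "((\<lambda>w. Qc t n (of_real w)) has_vector_derivative
          (of_real x powr (t - 1) * of_real ((- ln x) ^ n))) (at x)"
      using x' by (simp add: Ln_of_real)
    show "isCont (\<lambda>w. of_real w powr (t-1) * of_real ((-ln w)^n)) x"
      using x' by (auto intro!: continuous_intros simp: complex_nonpos_Reals_iff)
  next
    show "set_integrable lborel (einterval 0 1) (\<lambda>w. of_real w powr (t-1) * of_real ((-ln w)^n))"
      using int by (simp add: einterval_01)
  next
    have "((\<lambda>w. Qc t n (of_real w)) \<longlongrightarrow> 0) (at_right (0::real))"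
    proof (induction n)
      case 0
      then show ?case using term_lim0[OF t, of 0] by (auto intro: tendsto_divide_zero)
    next
      case (Suc n)
      have "((\<lambda>w. of_real w powr t * (- Ln (of_real w)) ^ Suc n / t
          + of_nat (Suc n) / t * Qc t n (of_real w)) \<longlongrightarrow> 0 / t + of_nat (Suc n) / t * 0) (at_right (0::real))"
        by (intro tendsto_add tendsto_divide tendsto_mult tendsto_const term_lim0[OF t] Suc.IH) (use t0 in auto)
      then show ?case by simp
    qed
    then show "(((\<lambda>w. Qc t n (of_real w)) \<circ> real_of_ereal) \<longlongrightarrow> 0) (at_right 0)"
      by (simp add: zero_ereal_def ereal_tendsto_simps)
  next
    have "isCont (Qc t n) 1"
      by (rule DERIV_isCont[OF Qc_deriv[OF t0]]) (auto simp: complex_nonpos_Reals_iff)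
    then have "isCont (\<lambda>w. Qc t n (of_real w)) (1::real)"
      by (auto intro!: continuous_intros isCont_o2[where f=of_real])
    then have "((\<lambda>w. Qc t n (of_real w)) \<longlongrightarrow> fact n / t ^ Suc n) (at_left (1::real))"
      using Qc_one[OF t0, of n] by (simp add: isCont_def filterlim_at_split)
    then show "(((\<lambda>w. Qc t n (of_real w)) \<circ> real_of_ereal) \<longlongrightarrow> fact n / t ^ Suc n) (at_left 1)"
      by (simp add: one_ereal_def ereal_tendsto_simps)
  qed
  then show ?thesis
    by (simp add: interval_lebesgue_integral_le_eq einterval_01)
qed



lemma ind_scale: "(y::real) > 0 \<Longrightarrow> indicator {0<..<y} (x * y) = (indicator {0<..<1} (x::real) :: real)"
proof -
  assume y: "y > 0"
  have "0 < x * y \<longleftrightarrow> 0 < x" using y by (smt (verit) zero_less_mult_iff)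
  moreover have "x * y < 1 * y \<longleftrightarrow> x < 1" using y by (simp only: mult_less_cancel_right) auto
  ultimately show ?thesis by (simp add: indicator_def)
qed

lemma affine_sub:
  fixes q :: "real \<Rightarrow> 'a::{banach, second_countable_topology}" assumes y: "y > 0"
  shows "(\<integral>x. indicator {0<..<1} x *\<^sub>R q (x * y) \<partial>lborel) = (1/y) *\<^sub>R (\<integral>w. indicator {0<..<y} w *\<^sub>R q w \<partial>lborel)"
proof -
  have "(\<integral>w. indicator {0<..<y} w *\<^sub>R q w \<partial>lborel) = \<bar>y\<bar> *\<^sub>R (\<integral>x. indicator {0<..<y} (0 + y * x) *\<^sub>R q (0 + y * x) \<partial>lborel)"
    using y by (intro lborel_integral_real_affine) simp
  also have "(\<lambda>x. indicator {0<..<y} (0 + y * x) *\<^sub>R q (0 + y * x)) = (\<lambda>x. indicator {0<..<1} x *\<^sub>R q (x * y))"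
    using y by (simp add: ind_scale mult.commute)
  finally show ?thesis using y by simp
qed

lemma affine_sub_int:
  fixes q :: "real \<Rightarrow> 'a::{banach, second_countable_topology}" assumes y: "y > 0"
  shows "integrable lborel (\<lambda>x. indicator {0<..<1} x *\<^sub>R q (x * y)) \<longleftrightarrow> integrable lborel (\<lambda>w. indicator {0<..<y} w *\<^sub>R q w)"
proof -
  have "integrable lborel (\<lambda>x. indicator {0<..<y} (0 + y * x) *\<^sub>R q (0 + y * x)) \<longleftrightarrow> integrable lborel (\<lambda>w. indicator {0<..<y} w *\<^sub>R q w)"
    using y by (intro lborel_integrable_real_affine_iff) simp
  also have "(\<lambda>x. indicator {0<..<y} (0 + y * x) *\<^sub>R q (0 + y * x)) = (\<lambda>x. indicator {0<..<1} x *\<^sub>R q (x * y))"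
    using y by (simp add: ind_scale mult.commute)
  finally show ?thesis .
qed

lemma FTC_log:
  assumes w: "0 < w" "w < 1"
  shows "(LINT y:{w<..<1}|lborel. (- ln y) ^ n / y) = (- ln w) ^ Suc n / real (Suc n)"
proof -
  define G where "G y = - ((- ln y) ^ Suc n) / real (Suc n)" for y
  have "(LBINT y=ereal w..ereal 1. (- ln y) ^ n / y) = G 1 - G w"
  proof (rule interval_integral_FTC_finite)
    show "continuous_on {min w 1..max w 1} (\<lambda>y. (- ln y) ^ n / y)"
      using w by (auto intro!: continuous_intros)
    fix x assume x: "min w 1 \<le> x" "x \<le> max w 1"
    then have x0: "x > 0" using w by auto
    have dL: "((\<lambda>y. - ln y) has_real_derivative - (1 / x)) (at x)"
      using x0 by (auto intro!: derivative_eq_intros)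
    have "(G has_real_derivative - (of_nat (Suc n) * (- (1 / x) * (- ln x) ^ n)) / real (Suc n)) (at x)"
      unfolding G_def using DERIV_power[OF dL, of "Suc n"] by (intro DERIV_cdivide DERIV_minus) simp
    then have "(G has_real_derivative (- ln x) ^ n / x) (at x)"
    proof (rule DERIV_cong)
      have "x + x * real n > 0" using x0 by (simp add: add_pos_nonneg)
      then show "- (of_nat (Suc n) * (- (1 / x) * (- ln x) ^ n)) / real (Suc n) = (- ln x) ^ n / x"
        using x0 by (simp add: field_simps)
    qed
    then show "(G has_vector_derivative (- ln x) ^ n / x) (at x within {min w 1..max w 1})"
      by (simp add: has_real_derivative_iff_has_vector_derivative has_vector_derivative_at_within)
  qed
  moreover have "einterval (ereal w) (ereal 1) = {w<..<1}" by (auto simp: einterval_def)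
  ultimately show ?thesis using w by (simp add: interval_lebesgue_integral_le_eq G_def)
qed



definition gI :: "complex \<Rightarrow> nat \<Rightarrow> real \<times> real \<Rightarrow> complex" where
  "gI t n p = (case p of (x, y) \<Rightarrow> of_real (x * y) powr (t - 1) * of_real ((- ln y) ^ n) / of_real (ln (x * y)))"

lemma inner_gen:
  fixes H Lv :: "real \<Rightarrow> 'a::{real_normed_field, banach, second_countable_topology}"
  shows "(\<integral>x. indicator {0<..<1} y *\<^sub>R (indicator {0<..<1} x *\<^sub>R (H (x * y) * Lv y)) \<partial>lborel)
     = (\<integral>w. (if 0 < w \<and> w < y \<and> y < 1 then Lv y / of_real y * H w else 0) \<partial>lborel)"
proof (cases "0 < y \<and> y < 1")
  case True
  have "(\<integral>x. indicator {0<..<1} y *\<^sub>R (indicator {0<..<1} x *\<^sub>R (H (x * y) * Lv y)) \<partial>lborel)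
      = (\<integral>x. (indicator {0<..<1} x *\<^sub>R H (x * y)) * Lv y \<partial>lborel)"
    using True by (simp add: indicator_def)
  also have "\<dots> = (\<integral>x. indicator {0<..<1} x *\<^sub>R H (x * y) \<partial>lborel) * Lv y"
    by (rule integral_mult_left_zero)
  also have "\<dots> = ((1/y) *\<^sub>R (\<integral>w. indicator {0<..<y} w *\<^sub>R H w \<partial>lborel)) * Lv y"
    using True by (simp add: affine_sub)
  also have "\<dots> = Lv y / of_real y * (\<integral>w. indicator {0<..<y} w *\<^sub>R H w \<partial>lborel)"
    using True by (simp add: scaleR_conv_of_real field_simps)
  also have "\<dots> = (\<integral>w. Lv y / of_real y * (indicator {0<..<y} w *\<^sub>R H w) \<partial>lborel)"
    by (rule integral_mult_right_zero[symmetric])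
  also have "\<dots> = (\<integral>w. (if 0 < w \<and> w < y \<and> y < 1 then Lv y / of_real y * H w else 0) \<partial>lborel)"
    using True by (intro Bochner_Integration.integral_cong) (auto simp: indicator_def)
  finally show ?thesis .
next
  case False
  then have "(\<lambda>w. (if 0 < w \<and> w < y \<and> y < 1 then Lv y / of_real y * H w else 0)) = (\<lambda>w. 0)"
    by auto
  moreover have "indicator {0<..<1} y = (0::real)" using False by (simp add: indicator_def)
  ultimately show ?thesis by simp
qed

lemma inner_gen_int:
  fixes H Lv :: "real \<Rightarrow> 'a::{real_normed_field, banach, second_countable_topology}"
  assumes y: "0 < y" "y < 1" and L: "Lv y \<noteq> 0"
    and int: "integrable lborel (\<lambda>x. indicator {0<..<1} y *\<^sub>R (indicator {0<..<1} x *\<^sub>R (H (x * y) * Lv y)))"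
  shows "integrable lborel (\<lambda>w. (if 0 < w \<and> w < y \<and> y < 1 then Lv y / of_real y * H w else 0))"
proof -
  have "integrable lborel (\<lambda>x. (indicator {0<..<1} y *\<^sub>R (indicator {0<..<1} x *\<^sub>R (H (x * y) * Lv y))) * inverse (Lv y))"
    using int by (rule integrable_mult_left)
  also have "(\<lambda>x. (indicator {0<..<1} y *\<^sub>R (indicator {0<..<1} x *\<^sub>R (H (x * y) * Lv y))) * inverse (Lv y))
     = (\<lambda>x. indicator {0<..<1} x *\<^sub>R H (x * y))"
    using y L by (auto simp: indicator_def)
  finally have "integrable lborel (\<lambda>x. indicator {0<..<1} x *\<^sub>R H (x * y))" .
  then have "integrable lborel (\<lambda>w. indicator {0<..<y} w *\<^sub>R H w)"
    using affine_sub_int[OF y(1), of H] by simp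
  then have "integrable lborel (\<lambda>w. Lv y / of_real y * (indicator {0<..<y} w *\<^sub>R H w))"
    by (rule integrable_mult_right)
  also have "(\<lambda>w. Lv y / of_real y * (indicator {0<..<y} w *\<^sub>R H w)) = (\<lambda>w. (if 0 < w \<and> w < y \<and> y < 1 then Lv y / of_real y * H w else 0))"
    using y by (auto simp: indicator_def)
  finally show ?thesis .
qed

lemma G_integral:
  fixes t :: complex
  assumes t: "Re t > 0"
    and int: "set_integrable lborel ({0<..<1} \<times> {0<..<1}) (gI t n)"
  shows "(LINT p:({0<..<1} \<times> {0<..<1})|lborel. gI t n p) = - (fact n / (of_nat (Suc n) * t ^ Suc n))"
proof -
  define h where "h w = of_real w powr (t - 1) / of_real (ln w)" for w :: real
  define l where "l y = complex_of_real ((- ln y) ^ n)" for y :: real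
  define f where "f x y = indicator ({0<..<1} \<times> {0<..<1}) (x, y) *\<^sub>R gI t n (x, y)" for x y :: real
  define F where "F y w = (if 0 < w \<and> w < y \<and> y < 1 then l y / of_real y * h w else 0)" for y w :: real
  have f_alt: "f x y = indicator {0<..<1} y *\<^sub>R (indicator {0<..<1} x *\<^sub>R (h (x * y) * l y))" for x y
    by (auto simp: f_def gI_def h_def l_def indicator_def)
  have int2: "integrable (lborel \<Otimes>\<^sub>M lborel) (case_prod f)"
    using int by (simp add: set_integrable_def lborel_prod f_def split_beta' cong: if_cong)
  have eq1: "(LINT p:({0<..<1} \<times> {0<..<1})|lborel. gI t n p) = (\<integral>y. \<integral>x. f x y \<partial>lborel \<partial>lborel)"
    using lborel_pair.integral_snd[OF int2]
    by (simp add: set_lebesgue_integral_def lborel_prod f_def split_beta')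
  have inner: "(\<integral>x. f x y \<partial>lborel) = (\<integral>w. F y w \<partial>lborel)" for y
    unfolding f_alt F_def by (rule inner_gen)
  have Fmeas: "(\<lambda>(y, w). F y w) \<in> borel_measurable (lborel \<Otimes>\<^sub>M lborel)"
    unfolding F_def h_def l_def by measurable
  have int3: "integrable (lborel \<Otimes>\<^sub>M lborel) (\<lambda>(y, w). F y w)"
  proof (rule lborel_pair.Fubini_integrable)
    show "(\<lambda>(y, w). F y w) \<in> borel_measurable (lborel \<Otimes>\<^sub>M lborel)" by (rule Fmeas)
  next
    have "integrable (lborel \<Otimes>\<^sub>M lborel) (\<lambda>(x, y). norm (f x y))"
      using integrable_norm[OF int2] by (simp add: split_beta')
    from lborel_pair.integrable_snd[OF this]
    have "integrable lborel (\<lambda>y. \<integral>x. norm (f x y) \<partial>lborel)" .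
    moreover have "(\<integral>x. norm (f x y) \<partial>lborel) = (\<integral>w. norm (F (fst (y, w)) (snd (y, w))) \<partial>lborel)" for y
    proof -
      have "(\<integral>x. norm (f x y) \<partial>lborel) = (\<integral>x. indicator {0<..<1} y *\<^sub>R (indicator {0<..<1} x *\<^sub>R (norm (h (x * y)) * norm (l y))) \<partial>lborel)"
        unfolding f_alt by (intro Bochner_Integration.integral_cong) (auto simp: indicator_def norm_mult)
      also have "\<dots> = (\<integral>w. (if 0 < w \<and> w < y \<and> y < 1 then norm (l y) / of_real y * norm (h w) else 0) \<partial>lborel)"
        by (rule inner_gen)
      also have "\<dots> = (\<integral>w. norm (F (fst (y, w)) (snd (y, w))) \<partial>lborel)"
        unfolding F_def by (intro Bochner_Integration.integral_cong) (auto simp: norm_mult norm_divide)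
      finally show ?thesis .
    qed
    ultimately show "integrable lborel (\<lambda>y. \<integral>w. norm ((\<lambda>(y, w). F y w) (y, w)) \<partial>lborel)"
      by simp
  next
    show "AE y in lborel. integrable lborel (\<lambda>w. (\<lambda>(y, w). F y w) (y, w))"
      using lborel_pair.AE_integrable_snd[OF int2]
    proof eventually_elim
      case (elim y)
      show ?case
      proof (cases "0 < y \<and> y < 1")
        case True
        have "l y \<noteq> 0" using True by (simp add: l_def)
        from inner_gen_int[of y l h, OF _ _ this] True elim show ?thesis
          unfolding f_alt F_def by simp
      next
        case False
        then have "(\<lambda>w. F y w) = (\<lambda>w. 0)" by (auto simp: F_def)
        then show ?thesis by simp
      qed
    qed
  qed
  have eq2: "(LINT p:({0<..<1} \<times> {0<..<1})|lborel. gI t n p) = (\<integral>w. \<integral>y. F y w \<partial>lborel \<partial>lborel)"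
    using eq1 inner lborel_pair.Fubini_integral[of F] int3 by (simp add: split_beta')
  have outer: "(\<integral>y. F y w \<partial>lborel) = indicator {0<..<1} w *\<^sub>R (- (of_real w powr (t - 1) * l w) / of_nat (Suc n))" for w
  proof (cases "0 < w \<and> w < 1")
    case True
    have "(\<integral>y. F y w \<partial>lborel) = (\<integral>y. complex_of_real (indicator {w<..<1} y *\<^sub>R ((- ln y) ^ n / y)) * h w \<partial>lborel)"
      using True by (intro Bochner_Integration.integral_cong) (auto simp: F_def l_def indicator_def)
    also have "\<dots> = complex_of_real (\<integral>y. indicator {w<..<1} y *\<^sub>R ((- ln y) ^ n / y) \<partial>lborel) * h w"
      by (subst integral_mult_left_zero) (simp only: integral_complex_of_real)
    also have "(\<integral>y. indicator {w<..<1} y *\<^sub>R ((- ln y) ^ n / y) \<partial>lborel) = (- ln w) ^ Suc n / real (Suc n)"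
      using FTC_log[of w n] True by (simp add: set_lebesgue_integral_def)
    also have "complex_of_real ((- ln w) ^ Suc n / real (Suc n)) * h w = - (of_real w powr (t - 1) * l w) / of_nat (Suc n)"
      using True by (simp add: h_def l_def field_simps)
    finally show ?thesis using True by simp
  next
    case False
    then have "(\<lambda>y. F y w) = (\<lambda>y. 0)" by (auto simp: F_def)
    then show ?thesis using False by (simp add: indicator_def)
  qed
  have int4: "integrable lborel (\<lambda>w. \<integral>y. F y w \<partial>lborel)"
    using lborel_pair.integrable_snd[of F] int3 by (simp add: split_beta')
  have "integrable lborel (\<lambda>w. (- of_nat (Suc n)) * (\<integral>y. F y w \<partial>lborel))"
    using int4 by (rule integrable_mult_right)
  also have "(\<lambda>w. (- of_nat (Suc n)) * (\<integral>y. F y w \<partial>lborel)) = (\<lambda>w. indicator {0<..<1} w *\<^sub>R (of_real w powr (t - 1) * of_real ((- ln w) ^ n)))"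
  proof (rule ext)
    fix w
    have nz: "(1 + complex_of_nat n) \<noteq> 0"
      by (metis of_nat_Suc of_nat_eq_0_iff add.commute nat.distinct(1))
    show "(- of_nat (Suc n)) * (\<integral>y. F y w \<partial>lborel) = indicator {0<..<1} w *\<^sub>R (of_real w powr (t - 1) * of_real ((- ln w) ^ n))"
      using nz by (simp add: outer l_def indicator_def field_simps)
  qed
  finally have int5: "set_integrable lborel {0<..<1} (\<lambda>w. of_real w powr (t - 1) * of_real ((- ln w) ^ n))"
    by (simp add: set_integrable_def)
  have "(\<integral>w. \<integral>y. F y w \<partial>lborel \<partial>lborel) = (\<integral>w. (- 1 / of_nat (Suc n)) * (indicator {0<..<1} w *\<^sub>R (of_real w powr (t - 1) * of_real ((- ln w) ^ n))) \<partial>lborel)"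
    by (intro Bochner_Integration.integral_cong) (auto simp: outer l_def indicator_def)
  also have "\<dots> = (- 1 / of_nat (Suc n)) * (LINT w:{0<..<1}|lborel. of_real w powr (t - 1) * of_real ((- ln w) ^ n))"
    unfolding set_lebesgue_integral_def by (rule integral_mult_right_zero)
  also have "\<dots> = (- 1 / of_nat (Suc n)) * (fact n / t ^ Suc n)"
    using K_integral[OF t int5] by simp
  finally show ?thesis using eq2 by simp
qed



lemma pexp_lim: "(r::real) > 1 \<Longrightarrow> c > 0 \<Longrightarrow> filterlim (\<lambda>k::nat. r ^ k / (real k + c) ^ s) at_top at_top"
  by real_asymp

lemma z_le1:
  fixes z a :: complex
  assumes nz: "\<And>k::nat. of_nat k + a \<noteq> 0" and sm: "summable (\<lambda>k. z ^ k / (of_nat k + a) ^ s)"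
  shows "norm z \<le> 1"
proof (rule ccontr)
  assume "\<not> norm z \<le> 1"
  then have r: "norm z > 1" by simp
  define c where "c = norm a + 1"
  have c: "c > 0" by (simp add: c_def add_nonneg_pos)
  have "filterlim (\<lambda>k::nat. norm z ^ k / (real k + c) ^ s) at_top at_top"
    using r c by (rule pexp_lim)
  then have ev1: "eventually (\<lambda>k. norm z ^ k / (real k + c) ^ s \<ge> 1) sequentially"
    by (simp add: filterlim_at_top)
  have "(\<lambda>k. z ^ k / (of_nat k + a) ^ s) \<longlonglongrightarrow> 0"
    using summable_LIMSEQ_zero[OF sm] .
  then have "(\<lambda>k. norm (z ^ k / (of_nat k + a) ^ s)) \<longlonglongrightarrow> 0"
    by (rule tendsto_norm_zero)
  then have ev2: "eventually (\<lambda>k. norm (z ^ k / (of_nat k + a) ^ s) < 1) sequentially"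
    by (rule order_tendstoD) simp
  from eventually_conj[OF ev1 ev2] obtain k where
    k1: "norm z ^ k / (real k + c) ^ s \<ge> 1" and k2: "norm (z ^ k / (of_nat k + a) ^ s) < 1"
    by (auto simp: eventually_sequentially)
  have "norm (of_nat k + a) \<le> real k + c"
    using norm_triangle_ineq[of "of_nat k" a] by (simp add: c_def)
  moreover have "norm (of_nat k + a) > 0" using nz[of k] by simp
  ultimately have "norm (of_nat k + a) ^ s \<le> (real k + c) ^ s"
    by (intro power_mono) auto
  moreover have "norm (of_nat k + a) ^ s > 0" using nz[of k] by simp
  ultimately have "norm z ^ k / (real k + c) ^ s \<le> norm z ^ k / norm (of_nat k + a) ^ s"
    by (intro divide_left_mono) auto
  also have "\<dots> = norm (z ^ k / (of_nat k + a) ^ s)" by (simp add: norm_divide norm_power)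
  finally show False using k1 k2 by simp
qed

lemma G_Re_pos:
  fixes t :: complex
  assumes int: "set_integrable lborel ({0<..<1} \<times> {0<..<1}) (gI t n)"
  shows "Re t > 0"
proof (rule ccontr)
  assume "\<not> Re t > 0"
  then have tle: "Re t \<le> 0" by simp
  define S where "S = ({0<..<1::real} \<times> {0<..<1::real})"
  define C where "C = (\<integral>p. norm (indicator S p *\<^sub>R gI t n p) \<partial>lborel)"
  have bound: "norm (fact n / (of_nat (Suc n) * (of_real \<epsilon>) ^ Suc n) :: complex) \<le> C" if e: "0 < \<epsilon>" for \<epsilon> :: real
  proof -
    have nb: "norm (indicator S p *\<^sub>R gI (of_real \<epsilon>) n p) \<le> norm (indicator S p *\<^sub>R gI t n p)" for p
    proof (cases "p \<in> S")
      case True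
      obtain x y where p: "p = (x, y)" by (cases p)
      with True have xy: "0 < x" "x < 1" "0 < y" "y < 1" by (auto simp: S_def)
      then have u: "0 < x * y" "x * y < 1" using mult_strict_mono[of x 1 y 1] by auto
      have "(x * y) powr (\<epsilon> - 1) \<le> (x * y) powr (Re t - 1)"
        using u tle e by (intro powr_mono') auto
      moreover have L: "ln (x * y) < 0" using u by simp
      ultimately show ?thesis using True u
        by (simp add: p gI_def norm_mult norm_divide norm_powr_real_powr)
           (intro divide_right_mono_neg mult_right_mono; simp)
    qed (simp)
    have int\<epsilon>: "set_integrable lborel S (gI (of_real \<epsilon>) n)"
      unfolding set_integrable_def
    proof (rule Bochner_Integration.integrable_bound)
      show "integrable lborel (\<lambda>p. indicator S p *\<^sub>R gI t n p)"
        using int by (simp add: set_integrable_def S_def)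
      show "(\<lambda>p. indicator S p *\<^sub>R gI (of_real \<epsilon>) n p) \<in> borel_measurable lborel"
        unfolding S_def gI_def lborel_prod[symmetric] by measurable
      show "AE p in lborel. norm (indicator S p *\<^sub>R gI (of_real \<epsilon>) n p) \<le> norm (indicator S p *\<^sub>R gI t n p)"
        using nb by simp
    qed
    have "fact n / (of_nat (Suc n) * (of_real \<epsilon>) ^ Suc n) = - (LINT p:S|lborel. gI (of_real \<epsilon>) n p)"
      using G_integral[of "of_real \<epsilon>" n] int\<epsilon> e by (simp add: S_def)
    then have "norm (fact n / (of_nat (Suc n) * (of_real \<epsilon>) ^ Suc n) :: complex) = norm (\<integral>p. indicator S p *\<^sub>R gI (of_real \<epsilon>) n p \<partial>lborel)"
      by (simp add: set_lebesgue_integral_def)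
    also have "\<dots> \<le> (\<integral>p. norm (indicator S p *\<^sub>R gI (of_real \<epsilon>) n p) \<partial>lborel)"
      by (rule integral_norm_bound)
    also have "\<dots> \<le> C"
      unfolding C_def
    proof (rule integral_mono)
      show "integrable lborel (\<lambda>p. norm (indicator S p *\<^sub>R gI (of_real \<epsilon>) n p))"
        using integrable_norm[OF int\<epsilon>[unfolded set_integrable_def]] by simp
      show "integrable lborel (\<lambda>p. norm (indicator S p *\<^sub>R gI t n p))"
        using integrable_norm[OF int[unfolded set_integrable_def]] by (simp add: S_def)
    qed (rule nb)
    finally show ?thesis .
  qed
  define \<epsilon> where "\<epsilon> = min 1 (fact n / (of_nat (Suc n) * (\<bar>C\<bar> + 1)))"
  have e0: "\<epsilon> > 0" unfolding \<epsilon>_def by (simp add: add_pos_nonneg)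
  have e1: "\<epsilon> \<le> 1" unfolding \<epsilon>_def by simp
  have "\<epsilon> ^ Suc n \<le> \<epsilon>" using e0 e1 by (simp add: power_le_one mult_left_le_one_le)
  have "norm (fact n / (of_nat (Suc n) * (of_real \<epsilon>) ^ Suc n) :: complex) = fact n / (real (Suc n) * \<epsilon> ^ Suc n)"
    using e0 by (simp add: norm_divide norm_mult norm_power del: of_nat_Suc)
  also have "\<dots> \<ge> fact n / (real (Suc n) * \<epsilon>)"
    using e0 \<open>\<epsilon> ^ Suc n \<le> \<epsilon>\<close> by (intro divide_left_mono mult_left_mono) auto
  moreover have "fact n / (real (Suc n) * \<epsilon>) \<ge> \<bar>C\<bar> + 1"
  proof -
    have "\<epsilon> \<le> fact n / (real (Suc n) * (\<bar>C\<bar> + 1))" unfolding \<epsilon>_def by simp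
    then have "\<epsilon> * (real (Suc n) * (\<bar>C\<bar> + 1)) \<le> fact n"
      by (simp add: field_simps add_pos_nonneg)
    moreover have pos: "real (Suc n) * \<epsilon> > 0" using e0 by simp
    ultimately show ?thesis by (simp only: pos_le_divide_eq[OF pos]) (simp add: mult_ac)
  qed
  ultimately show False using bound[OF e0] by linarith
qed



lemma lerch_part:
  fixes s :: nat and z a :: complex
  assumes s: "s > 1"
    and def: "lerch_defined z s a"
    and int: "set_integrable lborel ({0<..<1} \<times> {0<..<1}) (lerch_integrand z s a)"
  shows "lerch_phi z s a = (- of_nat s / of_nat (fact (s - 1))) *
                 (LINT p : {0<..<1} \<times> {0<..<1} | lborel. lerch_integrand z s a p)"
proof -
  obtain n where sn: "s = Suc n" using s by (cases s) auto
  define S where "S = ({0<..<1::real} \<times> {0<..<1::real})"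
  define f where "f = lerch_integrand z s a"
  define u where "u p = fst p * snd p" for p :: "real \<times> real"
  have nz: "\<And>k::nat. of_nat k + a \<noteq> 0" and sm: "summable (\<lambda>k. z ^ k / (of_nat k + a) ^ s)"
    using def by (auto simp: lerch_defined_def)
  have zr: "norm z \<le> 1" by (rule z_le1[OF nz sm])
  have uS: "0 < u p \<and> u p < 1" if "p \<in> S" for p
  proof -
    obtain x y where p: "p = (x, y)" by (cases p)
    with that have xy: "0 < x" "x < 1" "0 < y" "y < 1" by (auto simp: S_def)
    then show ?thesis using mult_strict_mono[of x 1 y 1] by (auto simp: u_def p)
  qed
  have zu: "norm (z * of_real (u p)) < 1" if "p \<in> S" for p
  proof -
    have "norm (z * of_real (u p)) = norm z * u p" using uS[OF that] by (simp add: norm_mult)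
    also have "\<dots> \<le> u p" using zr uS[OF that] by (simp add: mult_left_le_one_le)
    also have "\<dots> < 1" using uS[OF that] by simp
    finally show ?thesis .
  qed
  have zu1: "1 - z * of_real (u p) \<noteq> 0" if "p \<in> S" for p
    using zu[OF that] by auto
  have P1: "gI (a + of_nat k) n p = f p * ((1 - z * of_real (u p)) * of_real (u p) ^ k)" if "p \<in> S" for p k
  proof -
    obtain x y where p: "p = (x, y)" by (cases p)
    have u0: "x * y > 0" using uS[OF that] by (simp add: u_def p)
    define v where "v = complex_of_real (x * y)"
    define lg where "lg = complex_of_real ((- ln y) ^ n)"
    define L where "L = complex_of_real (ln (x * y))"
    define w where "w = 1 - z * v"
    have w0: "w \<noteq> 0" using zu1[OF that] by (simp add: w_def v_def u_def p)
    have v0: "v \<noteq> 0" using u0 unfolding v_def by (simp only: of_real_eq_0_iff)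
    have pw: "v powr (a + of_nat k - 1) = v powr (a - 1) * v ^ k"
    proof -
      have "a + of_nat k - 1 = (a - 1) + of_nat k" by simp
      then show ?thesis by (simp only: powr_add powr_nat'[OF disjI1[OF v0]])
    qed
    have g: "gI (a + of_nat k) n p = v powr (a - 1) * v ^ k * lg / L"
      by (simp add: gI_def p v_def lg_def L_def pw[unfolded v_def] del: of_real_mult)
    have ff: "f p = v powr (a - 1) * lg / (w * L)"
      by (simp add: f_def lerch_integrand_def p v_def lg_def L_def w_def sn del: of_real_mult)
    have "v powr (a - 1) * v ^ k * lg / L = v powr (a - 1) * lg / (w * L) * (w * v ^ k)"
      using w0 by (cases "L = 0") (simp_all add: field_simps)
    then show ?thesis using g ff by (simp add: w_def v_def u_def p)
  qed
  define F0 where "F0 p = indicator S p *\<^sub>R f p" for p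
  have intF0: "integrable lborel F0" using int unfolding set_integrable_def F0_def[abs_def] S_def f_def by simp
  have measF0: "F0 \<in> borel_measurable lborel" using intF0 by (rule borel_measurable_integrable)
  have intk: "set_integrable lborel S (gI (a + of_nat k) n)" for k
    unfolding set_integrable_def
  proof (rule Bochner_Integration.integrable_bound)
    show "integrable lborel (\<lambda>p. 2 *\<^sub>R F0 p)" using intF0 by (rule integrable_scaleR_right)
    show "(\<lambda>p. indicator S p *\<^sub>R gI (a + of_nat k) n p) \<in> borel_measurable lborel"
      unfolding S_def gI_def lborel_prod[symmetric] by measurable
    show "AE p in lborel. norm (indicator S p *\<^sub>R gI (a + of_nat k) n p) \<le> norm (2 *\<^sub>R F0 p)"
    proof (intro AE_I2)
      fix p show "norm (indicator S p *\<^sub>R gI (a + of_nat k) n p) \<le> norm (2 *\<^sub>R F0 p)"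
      proof (cases "p \<in> S")
        case True
        have "norm (1 - z * of_real (u p)) \<le> 1 + norm (z * of_real (u p))" using norm_triangle_ineq4[of "1::complex"] by simp
        then have A: "norm (1 - z * of_real (u p)) \<le> 2" using zu[OF True] by simp
        have B: "norm (of_real (u p) ^ k :: complex) \<le> 1" using uS[OF True] by (simp add: norm_power power_le_one)
        have "norm ((1 - z * of_real (u p)) * of_real (u p) ^ k) \<le> 2 * 1"
          unfolding norm_mult by (rule mult_mono) (use A B in auto)
        then have "norm (f p) * norm ((1 - z * of_real (u p)) * of_real (u p) ^ k) \<le> norm (f p) * 2"
          by (intro mult_left_mono) auto
        then show ?thesis using True by (simp add: P1 F0_def norm_mult mult.commute)
      qed (simp add: F0_def)
    qed
  qed
  have Rea: "Re a > 0" using G_Re_pos[of a n] intk[of 0] by (simp add: S_def)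
  have Ik: "(LINT p:S|lborel. gI (a + of_nat k) n p) = - (fact n / (of_nat (Suc n) * (a + of_nat k) ^ Suc n))" for k
    using G_integral[of "a + of_nat k" n] intk[of k] Rea by (simp add: S_def)
  define sN where "sN N p = (\<Sum>k<N. z ^ k * (indicator S p *\<^sub>R gI (a + of_nat k) n p))" for N p
  have intsN: "integrable lborel (sN N)" for N
  proof -
    have "integrable lborel (\<lambda>p. \<Sum>k\<in>{..<N}. z ^ k * (indicator S p *\<^sub>R gI (a + of_nat k) n p))"
      by (rule Bochner_Integration.integrable_sum, rule Bochner_Integration.integrable_mult_right, rule intk[unfolded set_integrable_def])
    then show ?thesis by (simp add: sN_def[abs_def])
  qed
  have sN_eq: "sN N p = F0 p * (1 - (z * of_real (u p)) ^ N)" for N p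
  proof (cases "p \<in> S")
    case True
    have "sN N p = (\<Sum>k<N. f p * (1 - z * of_real (u p)) * (z * of_real (u p)) ^ k)"
      unfolding sN_def using True by (intro sum.cong) (auto simp: P1 power_mult_distrib)
    also have "\<dots> = f p * ((1 - z * of_real (u p)) * (\<Sum>k<N. (z * of_real (u p)) ^ k))"
      by (simp add: sum_distrib_left mult.assoc)
    also have "\<dots> = f p * (1 - (z * of_real (u p)) ^ N)"
      by (simp add: one_diff_power_eq)
    finally show ?thesis using True by (simp add: F0_def)
  qed (simp add: sN_def F0_def)
  have lim: "(\<lambda>N. integral\<^sup>L lborel (sN N)) \<longlonglongrightarrow> integral\<^sup>L lborel F0"
  proof (rule integral_dominated_convergence[where w = "\<lambda>p. 2 * norm (F0 p)"])
    show "F0 \<in> borel_measurable lborel" by (rule measF0)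
    show "sN N \<in> borel_measurable lborel" for N using intsN by (rule borel_measurable_integrable)
    show "integrable lborel (\<lambda>p. 2 * norm (F0 p))" using intF0 by (intro integrable_mult_right integrable_norm)
    show "AE p in lborel. (\<lambda>N. sN N p) \<longlonglongrightarrow> F0 p"
    proof (intro AE_I2)
      fix p
      show "(\<lambda>N. sN N p) \<longlonglongrightarrow> F0 p"
      proof (cases "p \<in> S")
        case True
        have L0: "(\<lambda>N. (z * of_real (u p)) ^ N) \<longlonglongrightarrow> 0" by (rule LIMSEQ_power_zero[OF zu[OF True]])
        have "(\<lambda>N. F0 p * (1 - (z * of_real (u p)) ^ N)) \<longlonglongrightarrow> F0 p * (1 - 0)"
          by (intro tendsto_mult tendsto_diff tendsto_const L0)
        then show ?thesis by (simp add: sN_eq)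
      qed (simp add: sN_def F0_def)
    qed
    show "AE p in lborel. norm (sN N p) \<le> 2 * norm (F0 p)" for N
    proof (intro AE_I2)
      fix p show "norm (sN N p) \<le> 2 * norm (F0 p)"
      proof (cases "p \<in> S")
        case True
        have "norm (1 - (z * of_real (u p)) ^ N) \<le> 1 + norm ((z * of_real (u p)) ^ N)" using norm_triangle_ineq4[of "1::complex"] by simp
        also have "norm ((z * of_real (u p)) ^ N) \<le> 1"
          using zu[OF True] by (simp add: norm_power power_le_one)
        finally have "norm (1 - (z * of_real (u p)) ^ N) \<le> 2" by simp
        then have "norm (F0 p) * norm (1 - (z * of_real (u p)) ^ N) \<le> norm (F0 p) * 2"
          by (rule mult_left_mono) simp
        then show ?thesis unfolding sN_eq norm_mult by (simp add: mult.commute)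
      qed (simp add: sN_def F0_def)
    qed
  qed
  have intsum: "integral\<^sup>L lborel (sN N) = - (fact n / of_nat (Suc n)) * (\<Sum>k<N. z ^ k / (of_nat k + a) ^ s)" for N
  proof -
    have "integral\<^sup>L lborel (sN N) = (\<Sum>k\<in>{..<N}. integral\<^sup>L lborel (\<lambda>p. z ^ k * (indicator S p *\<^sub>R gI (a + of_nat k) n p)))"
      unfolding sN_def
      by (rule Bochner_Integration.integral_sum, rule Bochner_Integration.integrable_mult_right, rule intk[unfolded set_integrable_def])
    also have "\<dots> = (\<Sum>k<N. z ^ k * (LINT p:S|lborel. gI (a + of_nat k) n p))"
      unfolding set_lebesgue_integral_def by (simp only: integral_mult_right_zero)
    also have "\<dots> = (\<Sum>k<N. - (fact n / of_nat (Suc n)) * (z ^ k / (of_nat k + a) ^ s))"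
      by (intro sum.cong refl) (simp add: Ik sn add.commute)
    finally show ?thesis by (simp add: sum_distrib_left)
  qed
  have "(\<lambda>N. integral\<^sup>L lborel (sN N)) \<longlonglongrightarrow> - (fact n / of_nat (Suc n)) * lerch_phi z s a"
    unfolding intsum lerch_phi_def by (intro tendsto_mult tendsto_const summable_LIMSEQ sm)
  from LIMSEQ_unique[OF lim this]
  have "integral\<^sup>L lborel F0 = - (fact n / of_nat (Suc n)) * lerch_phi z s a" .
  moreover have "integral\<^sup>L lborel F0 = (LINT p : {0<..<1} \<times> {0<..<1} | lborel. lerch_integrand z s a p)"
    unfolding F0_def[abs_def] S_def f_def set_lebesgue_integral_def ..
  ultimately show ?thesis
    by (simp add: sn field_simps del: of_nat_Suc)
qed



lemma zeta_part:
  fixes s :: nat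
  assumes s: "s > 1"
    and int: "set_integrable lborel ({0<..<1} \<times> {0<..<1}) (zeta_integrand s)"
  shows "riemann_zeta s = real s / fact (s - 1) * (-1) ^ s *
                 (LINT p : {0<..<1} \<times> {0<..<1} | lborel. zeta_integrand s p)"
proof -
  obtain n where sn: "s = Suc n" using s by (cases s) auto
  define S where "S = ({0<..<1::real} \<times> {0<..<1::real})"
  have sumr: "summable (\<lambda>k. 1 / real (Suc k) ^ s)"
  proof -
    have "summable (\<lambda>k. inverse (real k ^ s))" using s by (intro inverse_power_summable) simp
    then have "summable (\<lambda>k. inverse (real (Suc k) ^ s))" by (subst summable_Suc_iff)
    then show ?thesis by (simp add: divide_inverse)
  qed
  have terms: "(\<lambda>k. (1::complex) ^ k / (of_nat k + 1) ^ s) = (\<lambda>k. complex_of_real (1 / real (Suc k) ^ s))"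
    by (auto simp: add.commute)
  have def: "lerch_defined 1 s 1"
    unfolding lerch_defined_def terms
  proof
    show "\<forall>k::nat. of_nat k + (1::complex) \<noteq> 0"
    proof
      fix k :: nat
      have "(of_nat k + 1 :: complex) = of_nat (Suc k)" by simp
      then show "of_nat k + (1::complex) \<noteq> 0" by (simp only: of_nat_eq_0_iff)
    qed
    show "summable (\<lambda>k. complex_of_real (1 / real (Suc k) ^ s))"
      using sumr by (simp only: summable_complex_of_real)
  qed
  have eqf: "indicator S p *\<^sub>R lerch_integrand 1 s 1 p = complex_of_real ((-1) ^ n * (indicator S p *\<^sub>R zeta_integrand s p))" for p
  proof (cases "p \<in> S")
    case True
    obtain x y where p: "p = (x, y)" by (cases p)
    with True have xy: "0 < x" "0 < y" by (auto simp: S_def)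
    have v0: "complex_of_real (x * y) \<noteq> 0" using xy by simp
    have pw: "complex_of_real (x * y) powr (1 - 1) = 1" using v0 by simp
    have l: "lerch_integrand 1 s 1 p = complex_of_real ((- ln y) ^ n / ((1 - x * y) * ln (x * y)))"
      unfolding lerch_integrand_def p prod.case pw sn by simp
    have r: "(- ln y) ^ n / ((1 - x * y) * ln (x * y)) = (-1) ^ n * ((ln y) ^ n / ((1 - x * y) * ln (x * y)))"
      by (subst power_minus) simp
    have zz: "zeta_integrand s p = (ln y) ^ n / ((1 - x * y) * ln (x * y))"
      unfolding zeta_integrand_def p prod.case sn by simp
    have i1: "indicator S p = (1::real)" using True by simp
    show ?thesis unfolding i1 l zz r by simp
  qed (simp)
  have intL: "set_integrable lborel ({0<..<1} \<times> {0<..<1}) (lerch_integrand 1 s 1)"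
  proof -
    have "integrable lborel (\<lambda>p. complex_of_real ((-1) ^ n * (indicator S p *\<^sub>R zeta_integrand s p)))"
      using int unfolding set_integrable_def S_def[symmetric] by (intro integrable_of_real integrable_mult_right) auto
    then have "integrable lborel (\<lambda>p. indicator S p *\<^sub>R lerch_integrand 1 s 1 p)" by (simp only: eqf)
    then show ?thesis unfolding set_integrable_def S_def .
  qed
  have L: "lerch_phi 1 s 1 = (- of_nat s / of_nat (fact (s - 1))) *
                 (LINT p : {0<..<1} \<times> {0<..<1} | lborel. lerch_integrand 1 s 1 p)"
    by (rule lerch_part[OF s def intL])
  have "lerch_phi 1 s 1 = complex_of_real (riemann_zeta s)"
    unfolding lerch_phi_def riemann_zeta_def terms by (rule suminf_of_real[OF sumr, symmetric])
  moreover have "(LINT p : {0<..<1} \<times> {0<..<1} | lborel. lerch_integrand 1 s 1 p)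
      = complex_of_real ((-1) ^ n * (LINT p : {0<..<1} \<times> {0<..<1} | lborel. zeta_integrand s p))"
    unfolding set_lebesgue_integral_def S_def[symmetric] eqf integral_complex_of_real integral_mult_right_zero ..
  ultimately have "complex_of_real (riemann_zeta s) = complex_of_real (- real s / real (fact n) * ((-1) ^ n *
      (LINT p : {0<..<1} \<times> {0<..<1} | lborel. zeta_integrand s p)))"
    using L by (simp add: sn)
  then have "riemann_zeta s = - real s / real (fact n) * ((-1) ^ n *
      (LINT p : {0<..<1} \<times> {0<..<1} | lborel. zeta_integrand s p))"
    by (simp only: of_real_eq_iff)
  then show ?thesis by (simp add: sn algebra_simps)
qed

theorem theorem3p2:
  fixes s :: nat
  assumes "s > 1"
  shows "(\<forall>(z::complex) (a::complex).
            lerch_defined z s a \<and>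
            set_integrable lborel ({0<..<1} \<times> {0<..<1}) (lerch_integrand z s a)
            \<longrightarrow> lerch_phi z s a =
                 (- of_nat s / of_nat (fact (s - 1))) *
                 (LINT p : {0<..<1} \<times> {0<..<1} | lborel. lerch_integrand z s a p))
       \<and> (set_integrable lborel ({0<..<1} \<times> {0<..<1}) (zeta_integrand s)
            \<longrightarrow> riemann_zeta s =
                 real s / fact (s - 1) * (-1) ^ s *
                 (LINT p : {0<..<1} \<times> {0<..<1} | lborel. zeta_integrand s p))"
  using lerch_part[OF assms] zeta_part[OF assms] by blast

end
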